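(* Let $G$ be a simple cubic graph and $(G',r)$ be constructed from $G$ as described in the context. A set $S\subseteq V(G')$ is a vector connectivity set for $(G',r)$ if and only if for every edge $e=xy$ of $G$, $S$ contains at least one vertex from each of the sets $X_e=\{x,w_{x,e},z_{x,e}\}$, $Z_e=\{z_{x,e},w_e,z_{y,e}\}$ and $Y_e=\{z_{y,e},w_{y,e},y\}$.
   Context: Construction of $G'$ from a cubic graph $G$: start with $G$. (1) For each edge $e=xy$ of $G$, delete $xy$, add three new vertices $w_{x,e},w_e,w_{y,e}$ and the edges $xw_{x,e}, w_{x,e}w_e, w_ew_{y,e}, w_{y,e}y$. (2) For each edge $e=xy$ of $G$, add two new vertices $z_{x,e},z_{y,e}$ and the edges $w_{x,e}z_{x,e}, z_{x,e}w_e, w_ez_{y,e}, z_{y,e}w_{y,e}$. (3) For every vertex $x$ of $G$ with incident edges $e,f,g$, add the edges $w_{x,e}w_{x,f}, w_{x,e}w_{x,g}, w_{x,f}w_{x,g}$. Requirements: for every edge $e=xy$ of $G$, $r(w_{x,e})=r(w_{y,e})=4$ and $r(w_e)=3$; $r(v')=0$ for all other vertices of $G'$. For $S\subseteq V(G')$ and $v\in V(G')\setminus S$, a $v$--$S$ fan of order $k$ is a collection of $k$ paths, each connecting $v$ to a vertex of $S$, pairwise vertex-disjoint except at $v$; $v$ is $k$-linked to $S$ if such a fan exists. A vector connectivity set for $(G',r)$ is a set $S$ such that every $v\in V(G')\setminus S$ is $r(v)$-linked to $S$. *)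

theory Defs
  imports Main
begin

definition is_path :: "'v set \<Rightarrow> ('v \<Rightarrow> 'v \<Rightarrow> bool) \<Rightarrow> 'v list \<Rightarrow> bool" where
  "is_path W A p \<longleftrightarrow> p \<noteq> [] \<and> distinct p \<and> set p \<subseteq> W \<and> successively A p"

definition has_fan :: "'v set \<Rightarrow> ('v \<Rightarrow> 'v \<Rightarrow> bool) \<Rightarrow> 'v \<Rightarrow> 'v set \<Rightarrow> nat \<Rightarrow> bool" where
  "has_fan W A v S k \<longleftrightarrow>
     (\<exists>P :: nat \<Rightarrow> 'v list.
        (\<forall>i<k. is_path W A (P i) \<and> hd (P i) = v \<and> last (P i) \<in> S) \<and>
        (\<forall>i<k. \<forall>j<k. i \<noteq> j \<longrightarrow> set (P i) \<inter> set (P j) = {v}))"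

abbreviation k_linked :: "'v set \<Rightarrow> ('v \<Rightarrow> 'v \<Rightarrow> bool) \<Rightarrow> 'v \<Rightarrow> nat \<Rightarrow> 'v set \<Rightarrow> bool" where
  "k_linked W A v k S \<equiv> has_fan W A v S k"

definition vc_set :: "'v set \<Rightarrow> ('v \<Rightarrow> 'v \<Rightarrow> bool) \<Rightarrow> ('v \<Rightarrow> nat) \<Rightarrow> 'v set \<Rightarrow> bool" where
  "vc_set W A r S \<longleftrightarrow> S \<subseteq> W \<and> (\<forall>v \<in> W - S. k_linked W A v (r v) S)"

definition cubic_graph :: "'a set \<Rightarrow> ('a \<Rightarrow> 'a \<Rightarrow> bool) \<Rightarrow> bool" where
  "cubic_graph V adj \<longleftrightarrow> finite V \<and>
     (\<forall>x y. adj x y \<longrightarrow> x \<in> V \<and> y \<in> V \<and> x \<noteq> y \<and> adj y x) \<and>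
     (\<forall>x \<in> V. card {y. adj x y} = 3)"

definition gedges :: "('a \<Rightarrow> 'a \<Rightarrow> bool) \<Rightarrow> 'a set set" where
  "gedges adj = {{x, y} | x y. adj x y}"

text \<open>Vertices of G': Orig x = x; WX x e = w_{x,e}; WE e = w_e; ZX x e = z_{x,e}.\<close>

datatype 'a gvert = Orig 'a | WX 'a "'a set" | WE "'a set" | ZX 'a "'a set"

definition gp_verts :: "'a set \<Rightarrow> ('a \<Rightarrow> 'a \<Rightarrow> bool) \<Rightarrow> 'a gvert set" where
  "gp_verts V adj = Orig ` V
     \<union> {WX x e | x e. e \<in> gedges adj \<and> x \<in> e}
     \<union> {WE e | e. e \<in> gedges adj}
     \<union> {ZX x e | x e. e \<in> gedges adj \<and> x \<in> e}"

text \<open>One orientation of each edge of G' (steps (1)--(3)); the edge xy of G itself is deleted.\<close>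

definition gp_edge0 :: "('a \<Rightarrow> 'a \<Rightarrow> bool) \<Rightarrow> 'a gvert \<Rightarrow> 'a gvert \<Rightarrow> bool" where
  "gp_edge0 adj u v \<longleftrightarrow>
     (\<exists>x e. e \<in> gedges adj \<and> x \<in> e \<and>
        ((u = Orig x \<and> v = WX x e) \<or>
         (u = WX x e \<and> v = WE e) \<or>
         (u = WX x e \<and> v = ZX x e) \<or>
         (u = ZX x e \<and> v = WE e))) \<or>
     (\<exists>x e f. e \<in> gedges adj \<and> f \<in> gedges adj \<and> x \<in> e \<and> x \<in> f \<and> e \<noteq> f \<and>
        u = WX x e \<and> v = WX x f)"

definition gp_adj :: "('a \<Rightarrow> 'a \<Rightarrow> bool) \<Rightarrow> 'a gvert \<Rightarrow> 'a gvert \<Rightarrow> bool" where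
  "gp_adj adj u v \<longleftrightarrow> gp_edge0 adj u v \<or> gp_edge0 adj v u"

fun gp_req :: "'a gvert \<Rightarrow> nat" where
  "gp_req (WX x e) = 4"
| "gp_req (WE e) = 3"
| "gp_req (Orig x) = 0"
| "gp_req (ZX x e) = 0"

end

theory Submission
  imports Defs
begin

lemma cub_sym: "cubic_graph V adj \<Longrightarrow> adj x y \<Longrightarrow> adj y x"
  by (simp add: cubic_graph_def)
lemma cub_V: "cubic_graph V adj \<Longrightarrow> adj x y \<Longrightarrow> x \<in> V \<and> y \<in> V \<and> x \<noteq> y"
  by (simp add: cubic_graph_def)

lemma gedges_I: "adj x y \<Longrightarrow> {x,y} \<in> gedges adj"
  unfolding gedges_def by blast

lemma gedges_E: "cubic_graph V adj \<Longrightarrow> f \<in> gedges adj \<Longrightarrow> x \<in> f \<Longrightarrow> \<exists>u. adj x u \<and> f = {x,u}"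
  unfolding gedges_def using cub_sym by fastforce

lemma verts:
  assumes "e \<in> gedges adj" "x \<in> e"
  shows "WX x e \<in> gp_verts V adj" "ZX x e \<in> gp_verts V adj" "WE e \<in> gp_verts V adj"
  using assms unfolding gp_verts_def by blast+

lemma vert_O: "x \<in> V \<Longrightarrow> Orig x \<in> gp_verts V adj"
  unfolding gp_verts_def by blast

lemma adjs:
  assumes "e \<in> gedges adj" "x \<in> e"
  shows "gp_adj adj (Orig x) (WX x e)" "gp_adj adj (WX x e) (Orig x)"
    "gp_adj adj (WX x e) (WE e)" "gp_adj adj (WE e) (WX x e)"
    "gp_adj adj (WX x e) (ZX x e)" "gp_adj adj (ZX x e) (WX x e)"
    "gp_adj adj (ZX x e) (WE e)" "gp_adj adj (WE e) (ZX x e)"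
  using assms unfolding gp_adj_def gp_edge0_def by blast+

lemma adjWW:
  assumes "e \<in> gedges adj" "x \<in> e" "f \<in> gedges adj" "x \<in> f" "e \<noteq> f"
  shows "gp_adj adj (WX x e) (WX x f)"
  using assms unfolding gp_adj_def gp_edge0_def by blast

lemma nb_WX: "gp_adj adj (WX x e) b \<Longrightarrow> b = Orig x \<or> b = WE e \<or> b = ZX x e \<or>
   (\<exists>f. b = WX x f \<and> f \<in> gedges adj \<and> x \<in> f \<and> f \<noteq> e)"
  unfolding gp_adj_def gp_edge0_def by auto

lemma nb_O: "gp_adj adj (Orig x) c \<Longrightarrow> \<exists>f. c = WX x f \<and> f \<in> gedges adj \<and> x \<in> f"
  unfolding gp_adj_def gp_edge0_def by auto

lemma nb_ZX: "gp_adj adj (ZX x e) c \<Longrightarrow> c = WX x e \<or> c = WE e"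
  unfolding gp_adj_def gp_edge0_def by auto

lemma nb_WE: "gp_adj adj (WE e) b \<Longrightarrow> \<exists>z\<in>e. b = WX z e \<or> b = ZX z e"
  unfolding gp_adj_def gp_edge0_def by auto

definition reach :: "'v set \<Rightarrow> ('v \<Rightarrow> 'v \<Rightarrow> bool) \<Rightarrow> 'v set \<Rightarrow> 'v \<Rightarrow> 'v set \<Rightarrow> bool" where
  "reach W A S a B \<longleftrightarrow> (\<exists>q. is_path W A q \<and> hd q = a \<and> last q \<in> S \<and> set q \<subseteq> B)"

lemma reach_base: "a \<in> S \<Longrightarrow> a \<in> W \<Longrightarrow> a \<in> B \<Longrightarrow> reach W A S a B"
  unfolding reach_def is_path_def by (rule exI[of _ "[a]"]) auto

lemma reach_step: "A a b \<Longrightarrow> a \<in> W \<Longrightarrow> reach W A S b B' \<Longrightarrow> a \<notin> B' \<Longrightarrow> insert a B' \<subseteq> B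
   \<Longrightarrow> reach W A S a B"
  unfolding reach_def is_path_def
  apply clarify
  subgoal for q by (rule exI[of _ "a # q"]) (auto simp: successively_Cons)
  done

lemma fan_gen:
  assumes "v \<in> W" "\<forall>i<k. A v (a i) \<and> reach W A S (a i) (B i) \<and> v \<notin> B i"
    "\<forall>i<k. \<forall>j<k. i \<noteq> j \<longrightarrow> B i \<inter> B j = {}"
  shows "has_fan W A v S k"
proof -
  have "\<forall>i\<in>{..<k}. \<exists>q. is_path W A q \<and> hd q = a i \<and> last q \<in> S \<and> set q \<subseteq> B i"
    using assms(2) unfolding reach_def by auto
  then obtain Q where Q: "\<forall>i\<in>{..<k}. is_path W A (Q i) \<and> hd (Q i) = a i \<and> last (Q i) \<in> S \<and> set (Q i) \<subseteq> B i"
    by (metis bchoice)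
  show ?thesis unfolding has_fan_def
  proof (rule exI[of _ "\<lambda>i. v # Q i"], rule conjI; intro allI impI)
    fix i assume i: "i < k"
    have q: "is_path W A (Q i)" "hd (Q i) = a i" "last (Q i) \<in> S" "set (Q i) \<subseteq> B i" "v \<notin> B i" "A v (a i)"
      using Q i assms(2) by auto
    then show "is_path W A (v # Q i) \<and> hd (v # Q i) = v \<and> last (v # Q i) \<in> S"
      using assms(1) unfolding is_path_def by (auto simp: successively_Cons)
  next
    fix i j assume ij: "i < k" "j < k" "i \<noteq> j"
    then have "set (Q i) \<inter> set (Q j) = {}" using Q assms(3) by blast
    then show "set (v # Q i) \<inter> set (v # Q j) = {v}" by auto
  qed
qed

lemma all4: "(\<forall>i<(4::nat). P i) \<longleftrightarrow> P 0 \<and> P 1 \<and> P 2 \<and> P 3"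
  by (auto simp: less_Suc_eq numeral_eq_Suc)
lemma all3: "(\<forall>i<(3::nat). P i) \<longleftrightarrow> P 0 \<and> P 1 \<and> P 2"
  by (auto simp: less_Suc_eq numeral_eq_Suc)

lemma fan4:
  assumes "v \<in> W"
    "A v a0" "reach W A S a0 B0" "v \<notin> B0"
    "A v a1" "reach W A S a1 B1" "v \<notin> B1"
    "A v a2" "reach W A S a2 B2" "v \<notin> B2"
    "A v a3" "reach W A S a3 B3" "v \<notin> B3"
    "B0 \<inter> B1 = {}" "B0 \<inter> B2 = {}" "B0 \<inter> B3 = {}" "B1 \<inter> B2 = {}" "B1 \<inter> B3 = {}" "B2 \<inter> B3 = {}"
  shows "has_fan W A v S 4"
  apply (rule fan_gen[where a="\<lambda>i. [a0,a1,a2,a3] ! i" and B="\<lambda>i. [B0,B1,B2,B3] ! i"])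
  using assms by (auto simp: all4 Int_commute)

lemma fan3:
  assumes "v \<in> W"
    "A v a0" "reach W A S a0 B0" "v \<notin> B0"
    "A v a1" "reach W A S a1 B1" "v \<notin> B1"
    "A v a2" "reach W A S a2 B2" "v \<notin> B2"
    "B0 \<inter> B1 = {}" "B0 \<inter> B2 = {}" "B1 \<inter> B2 = {}"
  shows "has_fan W A v S 3"
  apply (rule fan_gen[where a="\<lambda>i. [a0,a1,a2] ! i" and B="\<lambda>i. [B0,B1,B2] ! i"])
  using assms by (auto simp: all3 Int_commute)

lemma fan_count:
  assumes "has_fan W A v S k" "finite T" "card T < k" "v \<notin> T"
    "\<And>p. is_path W A p \<Longrightarrow> hd p = v \<Longrightarrow> last p \<in> S \<Longrightarrow> set p \<inter> T \<noteq> {}"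
  shows False
proof -
  obtain P where P: "\<forall>i<k. is_path W A (P i) \<and> hd (P i) = v \<and> last (P i) \<in> S"
    "\<forall>i<k. \<forall>j<k. i \<noteq> j \<longrightarrow> set (P i) \<inter> set (P j) = {v}"
    using assms(1) unfolding has_fan_def by blast
  define t where "t i = (SOME z. z \<in> set (P i) \<inter> T)" for i
  have t: "t i \<in> set (P i) \<inter> T" if "i < k" for i
    unfolding t_def by (rule someI_ex) (use assms(5) P(1) that in blast)
  have "inj_on t {..<k}"
  proof (rule inj_onI)
    fix i j assume "i \<in> {..<k}" "j \<in> {..<k}" "t i = t j"
    then show "i = j" using t P(2) assms(4) by (metis IntD1 IntD2 IntI lessThan_iff singletonD)
  qed
  then have "card (t ` {..<k}) = k" by (simp add: card_image)
  moreover have "t ` {..<k} \<subseteq> T" using t by auto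
  ultimately have "k \<le> card T" using assms(2) by (metis card_mono)
  then show False using assms(3) by simp
qed

lemma path_start:
  assumes "is_path W A p" "hd p = v" "last p \<in> S" "v \<notin> S"
  shows "\<exists>b rest. p = v # b # rest \<and> A v b \<and>
     (b \<notin> S \<longrightarrow> (\<exists>c rest'. rest = c # rest' \<and> A b c \<and> c \<noteq> v))"
proof -
  from assms obtain r where p: "p = v # r" unfolding is_path_def by (cases p) auto
  with assms have "r \<noteq> []" by auto
  then obtain b r' where r: "r = b # r'" by (cases r) auto
  have Ab: "A v b" using assms(1) unfolding p r is_path_def by simp
  have "b \<notin> S \<longrightarrow> (\<exists>c rest'. r' = c # rest' \<and> A b c \<and> c \<noteq> v)"
  proof
    assume "b \<notin> S"
    then have "r' \<noteq> []" using assms(3) p r by auto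
    then obtain c r'' where "r' = c # r''" by (cases r') auto
    then show "\<exists>c rest'. r' = c # rest' \<and> A b c \<and> c \<noteq> v"
      using assms(1) unfolding p r is_path_def by auto
  qed
  then show ?thesis using p r Ab by blast
qed

lemma nec_X:
  assumes cg: "cubic_graph V adj" and xy: "adj x y" and e: "e = {x,y}"
    and nS: "Orig x \<notin> S" "WX x e \<notin> S" "ZX x e \<notin> S"
    and fan: "has_fan (gp_verts V adj) (gp_adj adj) (WX x e) S 4"
  shows False
proof -
  define N where "N = {u. adj x u}"
  have cN: "card N = 3" using cg cub_V[OF cg xy] unfolding cubic_graph_def N_def by blast
  then have fN: "finite N" by (metis card.infinite zero_neq_numeral)
  have yN: "y \<in> N" using xy N_def by simp
  define T where "T = insert (WE e) ((\<lambda>u. WX x {x,u}) ` (N - {y}))"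
  have fT: "finite T" using fN T_def by simp
  have "card ((\<lambda>u. WX x {x,u}) ` (N - {y})) \<le> card (N - {y})" by (rule card_image_le) (use fN in simp)
  also have "card (N - {y}) = 2" using cN yN fN by simp
  finally have c2: "card ((\<lambda>u. WX x {x,u}) ` (N - {y})) \<le> 2" .
  have "card T \<le> Suc (card ((\<lambda>u. WX x {x,u}) ` (N - {y})))"
    unfolding T_def using fN by (simp add: card_insert_if)
  with c2 have cT: "card T < 4" by linarith
  have xney: "x \<noteq> y" using cub_V[OF cg xy] by simp
  have vT: "WX x e \<notin> T"
  proof
    assume "WX x e \<in> T"
    then obtain u where "u \<in> N" "u \<noteq> y" "{x,y} = {x,u}" unfolding T_def e by auto
    then show False using xney by (metis doubleton_eq_iff)
  qed
  have inT: "WX x f \<in> T" if H: "f \<in> gedges adj" "x \<in> f" "f \<noteq> e" for f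
  proof -
    obtain u where u: "adj x u" "f = {x,u}" using gedges_E[OF cg H(1,2)] by blast
    then have "u \<noteq> y" using H(3) e by auto
    then show ?thesis using u unfolding T_def N_def by auto
  qed
  have ge: "e \<in> gedges adj" using gedges_I[of adj x y, OF xy] e by simp
  show False
  proof (rule fan_count[OF fan fT cT vT])
    fix p assume p: "is_path (gp_verts V adj) (gp_adj adj) p" "hd p = WX x e" "last p \<in> S"
    obtain b rest where b: "p = WX x e # b # rest" "gp_adj adj (WX x e) b"
      "b \<notin> S \<longrightarrow> (\<exists>c rest'. rest = c # rest' \<and> gp_adj adj b c \<and> c \<noteq> WX x e)"
      using path_start[OF p nS(2)] by blast
    from nb_WX[OF b(2)] show "set p \<inter> T \<noteq> {}"
    proof (elim disjE exE conjE)
      assume "b = Orig x"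
      then obtain c rest' where "rest = c # rest'" "gp_adj adj (Orig x) c" "c \<noteq> WX x e"
        using b(3) nS by auto
      moreover obtain f where "c = WX x f" "f \<in> gedges adj" "x \<in> f" using nb_O[OF \<open>gp_adj adj (Orig x) c\<close>] by blast
      ultimately show ?thesis using inT b(1) by auto
    next
      assume "b = WE e" then show ?thesis using b(1) T_def by auto
    next
      assume "b = ZX x e"
      then obtain c rest' where "rest = c # rest'" "gp_adj adj (ZX x e) c" "c \<noteq> WX x e"
        using b(3) nS by auto
      then show ?thesis using nb_ZX b(1) T_def by fastforce
    next
      fix f assume "b = WX x f" "f \<in> gedges adj" "x \<in> f" "f \<noteq> e"
      then show ?thesis using inT b(1) by auto
    qed
  qed
qed

lemma nec_Z:
  assumes cg: "cubic_graph V adj" and xy: "adj x y" and e: "e = {x,y}"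
    and nS: "WE e \<notin> S" "ZX x e \<notin> S" "ZX y e \<notin> S"
    and fan: "has_fan (gp_verts V adj) (gp_adj adj) (WE e) S 3"
  shows False
proof -
  define T where "T = {WX x e, WX y e}"
  have cT: "card T < 3" unfolding T_def by (simp add: card_insert_if)
  show False
  proof (rule fan_count[OF fan _ cT])
    show "finite T" "WE e \<notin> T" unfolding T_def by auto
    fix p assume p: "is_path (gp_verts V adj) (gp_adj adj) p" "hd p = WE e" "last p \<in> S"
    obtain b rest where b: "p = WE e # b # rest" "gp_adj adj (WE e) b"
      "b \<notin> S \<longrightarrow> (\<exists>c rest'. rest = c # rest' \<and> gp_adj adj b c \<and> c \<noteq> WE e)"
      using path_start[OF p nS(1)] by blast
    from nb_WE[OF b(2)] obtain z where z: "z \<in> e" "b = WX z e \<or> b = ZX z e" by blast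
    have zz: "z = x \<or> z = y" using z e by auto
    show "set p \<inter> T \<noteq> {}"
    proof (cases "b = WX z e")
      case True then show ?thesis using zz b(1) T_def by auto
    next
      case False
      then have bz: "b = ZX z e" using z by auto
      then have "b \<notin> S" using zz nS by auto
      then obtain c rest' where "rest = c # rest'" "gp_adj adj (ZX z e) c" "c \<noteq> WE e"
        using b(3) bz by auto
      then show ?thesis using nb_ZX zz b(1) T_def by fastforce
    qed
  qed
qed

definition Hc :: "'a gvert set \<Rightarrow> ('a \<Rightarrow> 'a \<Rightarrow> bool) \<Rightarrow> bool" where
  "Hc S adj \<longleftrightarrow> (\<forall>x y. adj x y \<longrightarrow>
       S \<inter> {Orig x, WX x {x, y}, ZX x {x, y}} \<noteq> {} \<and>
       S \<inter> {ZX x {x, y}, WE {x, y}, ZX y {x, y}} \<noteq> {} \<and>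
       S \<inter> {ZX y {x, y}, WX y {x, y}, Orig y} \<noteq> {})"

lemma hX: "Hc S adj \<Longrightarrow> adj x y \<Longrightarrow> e = {x,y} \<Longrightarrow> S \<inter> {Orig x, WX x e, ZX x e} \<noteq> {}"
  unfolding Hc_def by blast
lemma hZ: "Hc S adj \<Longrightarrow> adj x y \<Longrightarrow> e = {x,y} \<Longrightarrow> S \<inter> {ZX x e, WE e, ZX y e} \<noteq> {}"
  unfolding Hc_def by blast

lemma two_nb:
  assumes cg: "cubic_graph V adj" and xy: "adj x y"
  shows "\<exists>u1 u2. adj x u1 \<and> adj x u2 \<and> u1 \<noteq> u2 \<and> u1 \<noteq> y \<and> u2 \<noteq> y \<and> u1 \<noteq> x \<and> u2 \<noteq> x"
proof -
  define N where "N = {u. adj x u}"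
  have cN: "card N = 3" using cg cub_V[OF cg xy] unfolding cubic_graph_def N_def by blast
  then have fN: "finite N" by (metis card.infinite zero_neq_numeral)
  have yN: "y \<in> N" using xy N_def by simp
  have "card (N - {y}) = 2" using cN yN fN by simp
  then obtain u1 u2 where u: "N - {y} = {u1,u2}" "u1 \<noteq> u2" by (auto simp: card_2_iff)
  then have "adj x u1" "adj x u2" "u1 \<noteq> y" "u2 \<noteq> y" unfolding N_def by auto
  moreover have "u1 \<noteq> x" "u2 \<noteq> x" using cub_V[OF cg] calculation by blast+
  ultimately show ?thesis using u by blast
qed

context
  fixes V :: "'a set" and adj :: "'a \<Rightarrow> 'a \<Rightarrow> bool" and S :: "'a gvert set"
  assumes cg: "cubic_graph V adj" and H: "Hc S adj"
begin

lemmas rs = reach_step[where A="gp_adj adj" and W="gp_verts V adj" and S=S]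
lemmas rb = reach_base[where A="gp_adj adj" and W="gp_verts V adj" and S=S]
lemmas f4 = fan4[where A="gp_adj adj" and W="gp_verts V adj" and S=S]
lemmas f3 = fan3[where A="gp_adj adj" and W="gp_verts V adj" and S=S]

lemma gadget:
  assumes xu: "adj x u" and f: "f = {x,u}"
  shows "reach (gp_verts V adj) (gp_adj adj) S (WX x f) {WX x f, ZX x f, WE f, ZX u f}"
proof -
  have ge: "f \<in> gedges adj" "x \<in> f" "u \<in> f" using gedges_I[of adj x u, OF xu] f by auto
  have xu': "x \<noteq> u" using cub_V[OF cg xu] by simp
  note V = verts[OF ge(1,2), of V] verts[OF ge(1,3), of V]
  note Aj = adjs[OF ge(1,2)] adjs[OF ge(1,3)]
  have "S \<inter> {ZX x f, WE f, ZX u f} \<noteq> {}" using hZ[OF H xu f] .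
  then consider "ZX x f \<in> S" | "WE f \<in> S" | "ZX u f \<in> S" by blast
  then show ?thesis
  proof cases
    case 1 show ?thesis
      by (rule rs[OF Aj(5) V(1) rb[OF 1 V(2), of "{ZX x f}"]]) auto
  next
    case 2 show ?thesis
      by (rule rs[OF Aj(3) V(1) rb[OF 2 V(3), of "{WE f}"]]) auto
  next
    case 3
    have "reach (gp_verts V adj) (gp_adj adj) S (WE f) {WE f, ZX u f}"
      by (rule rs[OF Aj(16) V(3) rb[OF 3 V(5), of "{ZX u f}"]]) auto
    then show ?thesis
      by (rule rs[OF Aj(3) V(1)]) (use xu' in auto)
  qed
qed

lemma reachX:
  assumes xy: "adj x y" and e: "e = {x,y}"
  shows "reach (gp_verts V adj) (gp_adj adj) S (WX x e) {WX x e, ZX x e, Orig x}"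
proof -
  have ge: "e \<in> gedges adj" "x \<in> e" using gedges_I[of adj x y, OF xy] e by auto
  note V = verts[OF ge(1,2), of V]
  have VO: "Orig x \<in> gp_verts V adj" by (rule vert_O) (use cub_V[OF cg xy] in blast)
  note Aj = adjs[OF ge(1,2)]
  have "S \<inter> {Orig x, WX x e, ZX x e} \<noteq> {}" using hX[OF H xy e] .
  then consider "WX x e \<in> S" | "ZX x e \<in> S" | "Orig x \<in> S" by blast
  then show ?thesis
  proof cases
    case 1 show ?thesis by (rule rb[OF 1 V(1)]) auto
  next
    case 2 show ?thesis
      by (rule rs[OF Aj(5) V(1) rb[OF 2 V(2), of "{ZX x e}"]]) auto
  next
    case 3 show ?thesis
      by (rule rs[OF Aj(2) V(1) rb[OF 3 VO, of "{Orig x}"]]) auto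
  qed
qed

lemma reachXy:
  assumes xy: "adj x y" and e: "e = {x,y}"
  shows "reach (gp_verts V adj) (gp_adj adj) S (WX y e) {WX y e, ZX y e, Orig y}"
proof -
  have e': "e = {y,x}" using e by blast
  show ?thesis using reachX[OF cub_sym[OF cg xy] e'] .
qed

lemma reachZ:
  assumes xy: "adj x y" and e: "e = {x,y}"
  shows "reach (gp_verts V adj) (gp_adj adj) S (WE e) {WE e, ZX x e, ZX y e}"
proof -
  have ge: "e \<in> gedges adj" "x \<in> e" "y \<in> e" using gedges_I[of adj x y, OF xy] e by auto
  note V = verts[OF ge(1,2), of V] verts[OF ge(1,3), of V]
  note Aj = adjs[OF ge(1,2)] adjs[OF ge(1,3)]
  have "S \<inter> {ZX x e, WE e, ZX y e} \<noteq> {}" using hZ[OF H xy e] .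
  then consider "WE e \<in> S" | "ZX x e \<in> S" | "ZX y e \<in> S" by blast
  then show ?thesis
  proof cases
    case 1 show ?thesis by (rule rb[OF 1 V(3)]) auto
  next
    case 2 show ?thesis
      by (rule rs[OF Aj(8) V(3) rb[OF 2 V(2), of "{ZX x e}"]]) auto
  next
    case 3 show ?thesis
      by (rule rs[OF Aj(16) V(3) rb[OF 3 V(5), of "{ZX y e}"]]) auto
  qed
qed

lemma reachWEy:
  assumes xy: "adj x y" and e: "e = {x,y}"
  shows "reach (gp_verts V adj) (gp_adj adj) S (WE e) {WE e, WX y e, ZX y e, Orig y}"
proof -
  have ge: "e \<in> gedges adj" "y \<in> e" using gedges_I[of adj x y, OF xy] e by auto
  note V = verts[OF ge(1,2), of V]
  note Aj = adjs[OF ge(1,2)]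
  show ?thesis by (rule rs[OF Aj(4) V(3) reachXy[OF xy e]]) auto
qed

lemma suff_WX:
  assumes xy: "adj x y" and e: "e = {x,y}" and nS: "WX x e \<notin> S"
  shows "has_fan (gp_verts V adj) (gp_adj adj) (WX x e) S 4"
proof -
  obtain u1 u2 where u: "adj x u1" "adj x u2" "u1 \<noteq> u2" "u1 \<noteq> y" "u2 \<noteq> y" "u1 \<noteq> x" "u2 \<noteq> x"
    using two_nb[OF cg xy] by blast
  define f where "f = {x,u1}"
  define g where "g = {x,u2}"
  have xney: "x \<noteq> y" using cub_V[OF cg xy] by simp
  have ne: "f \<noteq> e" "g \<noteq> e" "f \<noteq> g" unfolding f_def g_def e using u xney
    by (auto simp: doubleton_eq_iff)
  have ge: "e \<in> gedges adj" "x \<in> e" "y \<in> e" using gedges_I[of adj x y, OF xy] e by auto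
  have gf: "f \<in> gedges adj" "x \<in> f" using gedges_I[of adj x u1, OF u(1)] f_def by auto
  have gg: "g \<in> gedges adj" "x \<in> g" using gedges_I[of adj x u2, OF u(2)] g_def by auto
  note V = verts[OF ge(1,2), of V]
  have VO: "Orig x \<in> gp_verts V adj" by (rule vert_O) (use cub_V[OF cg xy] in blast)
  note Aj = adjs[OF ge(1,2)]
  have Af: "gp_adj adj (WX x e) (WX x f)" by (rule adjWW[OF ge(1,2) gf]) (use ne in auto)
  have Ag: "gp_adj adj (WX x e) (WX x g)" by (rule adjWW[OF ge(1,2) gg]) (use ne in auto)
  note Gf = gadget[OF u(1) f_def]
  note Gg = gadget[OF u(2) g_def]
  show ?thesis
  proof (cases "Orig x \<in> S")
    case True
    show ?thesis
      by (rule f4[OF V(1) Af Gf _ Ag Gg _ Aj(2) rb[OF True VO, of "{Orig x}"] _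
            Aj(3) reachZ[OF xy e]]) (use ne xney in auto)
  next
    case False
    then have Z: "ZX x e \<in> S" using hX[OF H xy e] nS by blast
    show ?thesis
      by (rule f4[OF V(1) Af Gf _ Ag Gg _ Aj(5) rb[OF Z V(2), of "{ZX x e}"] _
            Aj(3) reachWEy[OF xy e]]) (use ne xney in auto)
  qed
qed

lemma suff_WE0:
  assumes xy: "adj x y" and e: "e = {x,y}" and nS: "WE e \<notin> S" and Z: "ZX x e \<in> S"
  shows "has_fan (gp_verts V adj) (gp_adj adj) (WE e) S 3"
proof -
  obtain u1 u2 where u: "adj x u1" "u1 \<noteq> y" "u1 \<noteq> x"
    using two_nb[OF cg xy] by blast
  define f where "f = {x,u1}"
  have xney: "x \<noteq> y" using cub_V[OF cg xy] by simp
  have ne: "f \<noteq> e" unfolding f_def e using u xney by (auto simp: doubleton_eq_iff)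
  have ge: "e \<in> gedges adj" "x \<in> e" "y \<in> e" using gedges_I[of adj x y, OF xy] e by auto
  have gf: "f \<in> gedges adj" "x \<in> f" using gedges_I[of adj x u1, OF u(1)] f_def by auto
  note V = verts[OF ge(1,2), of V]
  note Aj = adjs[OF ge(1,2)] adjs[OF ge(1,3)]
  have Af: "gp_adj adj (WX x e) (WX x f)" by (rule adjWW[OF ge(1,2) gf]) (use ne in auto)
  note Gf = gadget[OF u(1) f_def]
  have R1: "reach (gp_verts V adj) (gp_adj adj) S (WX x e) {WX x e, WX x f, ZX x f, WE f, ZX u1 f}"
    by (rule rs[OF Af V(1) Gf]) (use ne in auto)
  show ?thesis
    by (rule f3[OF V(3) Aj(8) rb[OF Z V(2), of "{ZX x e}"] _ Aj(4) R1 _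
          Aj(12) reachXy[OF xy e]]) (use ne xney in auto)
qed

lemma suff_WE:
  assumes xy: "adj x y" and e: "e = {x,y}" and nS: "WE e \<notin> S"
  shows "has_fan (gp_verts V adj) (gp_adj adj) (WE e) S 3"
proof -
  from hZ[OF H xy e] nS consider "ZX x e \<in> S" | "ZX y e \<in> S" by blast
  then show ?thesis
  proof cases
    case 1 then show ?thesis using suff_WE0[OF xy e nS] by blast
  next
    case 2
    have e': "e = {y,x}" using e by blast
    show ?thesis using suff_WE0[OF cub_sym[OF cg xy] e' nS 2] .
  qed
qed

end


theorem mainTheorem4:
  fixes V :: "'a set" and adj :: "'a \<Rightarrow> 'a \<Rightarrow> bool" and S :: "'a gvert set"
  assumes "cubic_graph V adj"
    and "S \<subseteq> gp_verts V adj"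
  shows "vc_set (gp_verts V adj) (gp_adj adj) gp_req S \<longleftrightarrow>
    (\<forall>x y. adj x y \<longrightarrow>
       S \<inter> {Orig x, WX x {x, y}, ZX x {x, y}} \<noteq> {} \<and>
       S \<inter> {ZX x {x, y}, WE {x, y}, ZX y {x, y}} \<noteq> {} \<and>
       S \<inter> {ZX y {x, y}, WX y {x, y}, Orig y} \<noteq> {})"
proof
  assume vc: "vc_set (gp_verts V adj) (gp_adj adj) gp_req S"
  have fan: "has_fan (gp_verts V adj) (gp_adj adj) v S (gp_req v)"
    if "v \<in> gp_verts V adj" "v \<notin> S" for v
    using vc that unfolding vc_set_def by blast
  have X: "S \<inter> {Orig x, WX x {x, y}, ZX x {x, y}} \<noteq> {}" if xy: "adj x y" for x y
  proof
    assume E: "S \<inter> {Orig x, WX x {x, y}, ZX x {x, y}} = {}"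
    have ge: "{x,y} \<in> gedges adj" "x \<in> {x,y}" using gedges_I[of adj x y, OF xy] by auto
    have "has_fan (gp_verts V adj) (gp_adj adj) (WX x {x,y}) S 4"
      using fan[OF verts(1)[OF ge]] E by auto
    then show False using nec_X[OF assms(1) xy refl] E by blast
  qed
  show "\<forall>x y. adj x y \<longrightarrow>
       S \<inter> {Orig x, WX x {x, y}, ZX x {x, y}} \<noteq> {} \<and>
       S \<inter> {ZX x {x, y}, WE {x, y}, ZX y {x, y}} \<noteq> {} \<and>
       S \<inter> {ZX y {x, y}, WX y {x, y}, Orig y} \<noteq> {}"
  proof (intro allI impI conjI)
    fix x y assume xy: "adj x y"
    show "S \<inter> {Orig x, WX x {x, y}, ZX x {x, y}} \<noteq> {}" using X[OF xy] .
    have e': "{y,x} = {x,y}" by blast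
    show "S \<inter> {ZX y {x, y}, WX y {x, y}, Orig y} \<noteq> {}"
      using X[OF cub_sym[OF assms(1) xy]] unfolding e' by blast
    show "S \<inter> {ZX x {x, y}, WE {x, y}, ZX y {x, y}} \<noteq> {}"
    proof
      assume E: "S \<inter> {ZX x {x, y}, WE {x, y}, ZX y {x, y}} = {}"
      have ge: "{x,y} \<in> gedges adj" "x \<in> {x,y}" using gedges_I[of adj x y, OF xy] by auto
      have "has_fan (gp_verts V adj) (gp_adj adj) (WE {x,y}) S 3"
        using fan[OF verts(3)[OF ge]] E by auto
      then show False using nec_Z[OF assms(1) xy refl] E by blast
    qed
  qed
next
  assume R: "\<forall>x y. adj x y \<longrightarrow>
       S \<inter> {Orig x, WX x {x, y}, ZX x {x, y}} \<noteq> {} \<and>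
       S \<inter> {ZX x {x, y}, WE {x, y}, ZX y {x, y}} \<noteq> {} \<and>
       S \<inter> {ZX y {x, y}, WX y {x, y}, Orig y} \<noteq> {}"
  then have H: "Hc S adj" unfolding Hc_def .
  show "vc_set (gp_verts V adj) (gp_adj adj) gp_req S"
    unfolding vc_set_def
  proof (intro conjI ballI)
    show "S \<subseteq> gp_verts V adj" by fact
    fix v assume v: "v \<in> gp_verts V adj - S"
    show "has_fan (gp_verts V adj) (gp_adj adj) v S (gp_req v)"
    proof (cases v)
      case (Orig x) then show ?thesis by (simp add: has_fan_def)
    next
      case (ZX x e) then show ?thesis by (simp add: has_fan_def)
    next
      case (WX x e)
      then have "e \<in> gedges adj" "x \<in> e" using v unfolding gp_verts_def by auto
      then obtain y where "adj x y" "e = {x,y}" using gedges_E[OF assms(1)] by blast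
      then show ?thesis using suff_WX[OF assms(1) H] v WX by auto
    next
      case (WE e)
      then have "e \<in> gedges adj" using v unfolding gp_verts_def by auto
      then obtain x y where "adj x y" "e = {x,y}" unfolding gedges_def by blast
      then show ?thesis using suff_WE[OF assms(1) H] v WE by auto
    qed
  qed
qed

end
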